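(* For real $u\ge3$, $$P_3(u)=\tfrac12\mathrm{Li}_3\!\left(\frac{1}{u(2-u)}\right)-\mathrm{Li}_3\!\left(\frac1u\right)-\mathrm{Li}_3\!\left(\frac{1}{2-u}\right)+\mathrm{Li}_2\!\left(\frac1u\right)\log(u-2)+\tfrac13\zeta_3-\tfrac12\zeta_2\log(u)+\tfrac1{12}\log^3\!\big(u(u-2)\big)-\tfrac12\log^2(u-2)\log(u).$$
   Context: The functions $P_k$ are defined by $P_0(u)=1$ for $u\ge 0$, and for integers $k\ge1$, $P_k:[k,\infty)\to\mathbb{R}$ is the function with $P_k(k)=0$ and $uP_k'(u)=P_{k-1}(u-1)$ for $u\ge k$. Here $\mathrm{Li}_k(z)=\sum_{n\ge1}z^n/n^k$ for $|z|\le1$ and $\zeta_k=\mathrm{Li}_k(1)$. *)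

theory Defs
  imports "HOL-Analysis.Analysis"
begin

text \<open>Real polylogarithm Li_k(z) = sum_{n>=1} z^n / n^k, intended for |z| <= 1.\<close>
definition polylog :: "nat \<Rightarrow> real \<Rightarrow> real" where
  "polylog k z = (\<Sum>n. z ^ (Suc n) / (real (Suc n)) ^ k)"

definition zeta_val :: "nat \<Rightarrow> real" where
  "zeta_val k = polylog k 1"

end

theory Submission
  imports Defs "HOL-Real_Asymp.Real_Asymp"
begin

lemma summable_inv_sq: "summable (\<lambda>n. 1 / real (Suc n) ^ 2)"
proof -
  have "summable (\<lambda>n. inverse (real n ^ 2))" by (rule inverse_power_summable) auto
  then have "summable (\<lambda>n. inverse (real (Suc n) ^ 2))" by (subst summable_Suc_iff)
  then show ?thesis by (simp add: field_simps)
qed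

lemma polylog_summable_lt1:
  fixes z :: real assumes "\<bar>z\<bar> < 1"
  shows "summable (\<lambda>n. z ^ Suc n / real (Suc n) ^ k)"
proof (rule summable_comparison_test)
  show "summable (\<lambda>n. \<bar>z\<bar> * \<bar>z\<bar> ^ n)"
    using assms by (intro summable_mult summable_geometric) auto
  show "\<exists>N. \<forall>n\<ge>N. norm (z ^ Suc n / real (Suc n) ^ k) \<le> \<bar>z\<bar> * \<bar>z\<bar> ^ n"
  proof (intro exI allI impI)
    fix n :: nat
    have "1 \<le> real (Suc n) ^ k" by (simp add: one_le_power)
    then have "\<bar>z\<bar> ^ Suc n / real (Suc n) ^ k \<le> \<bar>z\<bar> ^ Suc n / 1"
      by (intro divide_left_mono) auto
    then show "norm (z ^ Suc n / real (Suc n) ^ k) \<le> \<bar>z\<bar> * \<bar>z\<bar> ^ n"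
      by (simp add: abs_divide power_abs abs_mult)
  qed
qed

lemma polylog_bound_le1:
  fixes z :: real assumes "\<bar>z\<bar> \<le> 1" "k \<ge> 2"
  shows "norm (z ^ Suc n / real (Suc n) ^ k) \<le> 1 / real (Suc n) ^ 2"
proof -
  have "real (Suc n) ^ 2 \<le> real (Suc n) ^ k" using assms(2) by (intro power_increasing) auto
  moreover have "\<bar>z\<bar> ^ Suc n \<le> 1" using assms(1) by (intro power_le_one) auto
  ultimately show ?thesis
    unfolding real_norm_def abs_divide
    by (intro frac_le) (auto simp: power_abs abs_mult simp del: of_nat_Suc)
qed

lemma polylog_summable_le1:
  fixes z :: real assumes "\<bar>z\<bar> \<le> 1" "k \<ge> 2"
  shows "summable (\<lambda>n. z ^ Suc n / real (Suc n) ^ k)"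
  by (rule summable_comparison_test[OF _ summable_inv_sq]) (use polylog_bound_le1[OF assms] in auto)

lemma polylog_cont: assumes "k \<ge> 2" shows "continuous_on {-1..1} (polylog k)"
proof -
  have ul: "uniform_limit {-1..1} (\<lambda>n x. \<Sum>i<n. x ^ Suc i / real (Suc i) ^ k)
      (\<lambda>x. \<Sum>i. x ^ Suc i / real (Suc i) ^ k) sequentially"
    by (rule Weierstrass_m_test[OF _ summable_inv_sq]) (use polylog_bound_le1 assms in auto)
  have "continuous_on {-1..1} (\<lambda>x. \<Sum>i. x ^ Suc i / real (Suc i) ^ k)"
    by (rule uniform_limit_theorem[OF _ ul])
      (auto intro!: always_eventually continuous_on_sum continuous_on_divide continuous_intros simp del: of_nat_Suc)
  then show ?thesis unfolding polylog_def[abs_def] .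
qed

lemma polylog_0[simp]: "polylog k 0 = 0"
  by (simp add: polylog_def)

definition pdl :: "nat \<Rightarrow> real \<Rightarrow> real" where
  "pdl j z = (\<Sum>n. z ^ n / real (Suc n) ^ j)"

lemma pdl_summable: fixes z :: real assumes "\<bar>z\<bar> < 1"
  shows "summable (\<lambda>n. z ^ n / real (Suc n) ^ j)"
proof (rule summable_comparison_test)
  show "summable (\<lambda>n. \<bar>z\<bar> ^ n)" using assms by (intro summable_geometric) auto
  show "\<exists>N. \<forall>n\<ge>N. norm (z ^ n / real (Suc n) ^ j) \<le> \<bar>z\<bar> ^ n"
  proof (intro exI allI impI)
    fix n :: nat
    have "1 \<le> real (Suc n) ^ j" by (simp add: one_le_power)
    then have "\<bar>z\<bar> ^ n / real (Suc n) ^ j \<le> \<bar>z\<bar> ^ n / 1"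
      by (intro divide_left_mono) auto
    then show "norm (z ^ n / real (Suc n) ^ j) \<le> \<bar>z\<bar> ^ n"
      by (simp add: abs_divide power_abs)
  qed
qed

lemma pdl_eq: assumes "\<bar>z\<bar> < 1" "z \<noteq> 0" shows "pdl j z = polylog j z / z"
proof -
  have "z * pdl j z = (\<Sum>n. z * (z ^ n / real (Suc n) ^ j))"
    unfolding pdl_def using pdl_summable[OF assms(1)] by (rule suminf_mult[symmetric])
  also have "\<dots> = polylog j z" by (simp add: polylog_def)
  finally show ?thesis using assms(2) by (simp add: field_simps)
qed

lemma polylog_deriv:
  fixes z :: real assumes "\<bar>z\<bar> < 1" "k \<ge> 1"
  shows "(polylog k has_real_derivative pdl (k - 1) z) (at z)"
proof -
  define c where "c = (\<lambda>n::nat. if n = 0 then 0 else 1 / real n ^ k)"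
  have eq: "polylog k x = (\<Sum>n. c n * x ^ n)" if "\<bar>x\<bar> < 1" for x :: real
  proof -
    have s: "summable (\<lambda>n. c n * x ^ n)"
      using polylog_summable_lt1[OF that, of k] by (subst summable_Suc_iff[symmetric]) (simp add: c_def)
    show ?thesis using suminf_split_head[OF s] by (simp add: c_def polylog_def)
  qed
  obtain K where K: "\<bar>z\<bar> < K" "K < 1" using assms(1) dense by blast
  have "((\<lambda>x. \<Sum>n. c n * x ^ n) has_field_derivative (\<Sum>n. diffs c n * z ^ n)) (at z)"
  proof (rule termdiffs_strong)
    show "summable (\<lambda>n. c n * K ^ n)"
    proof -
      have "\<bar>K\<bar> < 1" using K by auto
      from polylog_summable_lt1[OF this, of k] show ?thesis
        by (subst summable_Suc_iff[symmetric]) (simp add: c_def)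
    qed
    show "norm z < norm K" using K by auto
  qed
  moreover have "(\<Sum>n. diffs c n * z ^ n) = pdl (k - 1) z"
  proof -
    have "diffs c n * z ^ n = z ^ n / real (Suc n) ^ (k - 1)" for n
    proof -
      have "real (Suc n) ^ k = real (Suc n) * real (Suc n) ^ (k - 1)"
        using assms(2) by (metis Suc_diff_le diff_Suc_1 le_refl power_Suc) 
      then show ?thesis by (simp add: diffs_def c_def field_simps del: of_nat_Suc)
    qed
    then show ?thesis by (simp add: pdl_def)
  qed
  moreover have "eventually (\<lambda>x. polylog k x = (\<Sum>n. c n * x ^ n)) (nhds z)"
  proof -
    have "eventually (\<lambda>x. x \<in> {-1<..<1}) (nhds z)"
      using assms(1) by (intro eventually_nhds_in_open) auto
    then show ?thesis by (rule eventually_mono) (auto intro!: eq)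
  qed
  ultimately show ?thesis
    using DERIV_cong_ev[of z z "polylog k" "\<lambda>x. \<Sum>n. c n * x ^ n"] by auto
qed

lemma polylog1: assumes "\<bar>z\<bar> < 1" shows "polylog 1 z = - ln (1 - z)"
proof -
  have "ln (1 - z) = (\<Sum>n. (-1)^n * (1 / real (n + 1)) * ((1 - z) - 1)^(Suc n))"
    using assms by (intro ln_series) auto
  also have "\<dots> = (\<Sum>n. - (z ^ Suc n / real (Suc n)))"
    by (intro suminf_cong) (simp add: power_minus' field_simps)
  also have "\<dots> = - polylog 1 z"
    unfolding polylog_def using polylog_summable_lt1[OF assms, of 1] by (simp add: suminf_minus)
  finally show ?thesis by simp
qed

lemma lim_lnln: "((\<lambda>x::real. ln x * ln (1 - x)) \<longlongrightarrow> 0) (at_right 0)" by real_asymp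

lemma Li2_deriv: assumes "\<bar>z\<bar> < 1" "z \<noteq> 0"
  shows "(polylog 2 has_real_derivative (- ln (1 - z) / z)) (at z)"
  using polylog_deriv[OF assms(1), of 2] pdl_eq[OF assms, of 1] polylog1[OF assms(1)] by simp

lemma Li3_deriv: assumes "\<bar>z\<bar> < 1" "z \<noteq> 0"
  shows "(polylog 3 has_real_derivative (polylog 2 z / z)) (at z)"
  using polylog_deriv[OF assms(1), of 3] pdl_eq[OF assms, of 2] by simp

lemma DERIV_Li2[derivative_intros]:
  assumes "(f has_real_derivative f') (at x within s)" "\<bar>f x\<bar> < 1" "f x \<noteq> 0"
  shows "((\<lambda>x. polylog 2 (f x)) has_real_derivative (- ln (1 - f x) / f x * f')) (at x within s)"
  using DERIV_chain2[OF Li2_deriv[OF assms(2,3)] assms(1)] .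

lemma DERIV_Li3[derivative_intros]:
  assumes "(f has_real_derivative f') (at x within s)" "\<bar>f x\<bar> < 1" "f x \<noteq> 0"
  shows "((\<lambda>x. polylog 3 (f x)) has_real_derivative (polylog 2 (f x) / f x * f')) (at x within s)"
  using DERIV_chain2[OF Li3_deriv[OF assms(2,3)] assms(1)] .

lemma DERIV_ln_comp[derivative_intros]:
  assumes "(f has_real_derivative f') (at x within s)" "0 < f x"
  shows "((\<lambda>x. ln (f x)) has_real_derivative (f' / f x)) (at x within s)"
  using DERIV_chain2[OF DERIV_ln_divide[OF assms(2)] assms(1)] by simp

lemma Li_tendsto:
  assumes "k \<ge> 2" "(f \<longlongrightarrow> a) F" "a \<in> {-1..1}" "eventually (\<lambda>x. f x \<in> {-1..1}) F"
  shows "((\<lambda>x. polylog k (f x)) \<longlongrightarrow> polylog k a) F"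
  by (rule continuous_on_tendsto_compose[OF polylog_cont[OF assms(1)] assms(2-4)])

lemma Li_cont_on:
  assumes "k \<ge> 2" "continuous_on S f" "\<And>x. x \<in> S \<Longrightarrow> f x \<in> {-1..1}"
  shows "continuous_on S (\<lambda>x. polylog k (f x))"
  by (rule continuous_on_compose2[OF polylog_cont[OF assms(1)] assms(2)]) (use assms(3) in auto)

lemma const_end:
  fixes g :: "real \<Rightarrow> real"
  assumes "a \<le> x" "x \<le> b" "continuous_on {a..b} g" "\<And>t. a < t \<Longrightarrow> t < b \<Longrightarrow> (g has_real_derivative 0) (at t)"
  shows "g x = g b"
proof (cases "x = b")
  case False
  then have "x < b" using assms by auto
  have "continuous_on {x..b} g" using assms(1,3) continuous_on_subset by fastforce
  from DERIV_isconst_end[OF \<open>x < b\<close> this] assms(1,4) show ?thesis by force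
qed simp

lemma const_start:
  fixes g :: "real \<Rightarrow> real"
  assumes "a \<le> x" "x \<le> b" "continuous_on {a..b} g" "\<And>t. a < t \<Longrightarrow> t < b \<Longrightarrow> (g has_real_derivative 0) (at t)"
  shows "g x = g a"
proof (cases "a < b")
  case True
  then show ?thesis using DERIV_isconst2[OF True assms(3) assms(4) assms(1,2)] by simp
next
  case False
  then have "x = a" using assms(1,2) by linarith
  then show ?thesis by simp
qed

lemma anchor0:
  fixes g :: "real \<Rightarrow> real"
  assumes c: "0 < c" and cont: "continuous_on {0<..c} g"
    and der: "\<And>t. 0 < t \<Longrightarrow> t < c \<Longrightarrow> (g has_real_derivative 0) (at t)"
    and lim: "(g \<longlongrightarrow> L) (at_right 0)"
    and x: "0 < x" "x \<le> c"
  shows "g x = L"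
proof -
  have eq: "g y = g c" if "0 < y" "y \<le> c" for y
  proof (rule const_end[OF _ that(2)])
    show "y \<le> y" by simp
    show "continuous_on {y..c} g" by (rule continuous_on_subset[OF cont]) (use that in auto)
    show "(g has_real_derivative 0) (at t)" if "y < t" "t < c" for t
      by (rule der) (use that \<open>0 < y\<close> in auto)
  qed
  have "eventually (\<lambda>y. g y = g c) (at_right 0)"
    using eventually_at_right_real[OF c] by (rule eventually_mono) (auto intro!: eq)
  then have ev': "eventually (\<lambda>y. g c = g y) (at_right 0)"
    by (rule eventually_mono) simp
  have "(g \<longlongrightarrow> g c) (at_right 0)"
    using tendsto_cong[OF ev', of "g c"] by simp
  then have "L = g c" using tendsto_unique[OF _ lim] by (simp add: trivial_limit_at_right_real)
  then show ?thesis using eq[OF x] by simp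
qed

lemma zeta2_def': "zeta_val 2 = polylog 2 1" by (simp add: zeta_val_def)

lemma Li2_reflection:
  assumes "0 < x" "x < 1"
  shows "polylog 2 x + polylog 2 (1 - x) = zeta_val 2 - ln x * ln (1 - x)"
proof -
  define g where "g x = polylog 2 x + polylog 2 (1 - x) + ln x * ln (1 - x)" for x
  have main: "g x = zeta_val 2" if "0 < x" "x \<le> 1/2" for x
  proof (rule anchor0[of "1/2" g])
    show "continuous_on {0<..1/2} g" unfolding g_def
      by (intro continuous_intros Li_cont_on) auto
    show "(g has_real_derivative 0) (at t)" if "0 < t" "t < 1/2" for t
    proof -
      show ?thesis unfolding g_def
        apply (rule derivative_eq_intros refl | use that in simp)+
        done
    qed
    show "(g \<longlongrightarrow> zeta_val 2) (at_right 0)"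
    proof -
      have ev: "eventually (\<lambda>x. x \<in> {0<..<1}) (at_right (0::real))"
        using eventually_at_right_real[of 0 "1::real"] by simp
      have 1: "((\<lambda>x. polylog 2 x) \<longlongrightarrow> polylog 2 0) (at_right 0)"
        using Li_tendsto[of 2 "\<lambda>x. x" 0 "at_right 0"] tendsto_ident_at[of 0 "{0<..}"]
          eventually_mono[OF ev, of "\<lambda>x. x \<in> {-1..1}"] by auto
      have 2: "((\<lambda>x. polylog 2 (1 - x)) \<longlongrightarrow> polylog 2 1) (at_right 0)"
        using Li_tendsto[of 2 "\<lambda>x. 1 - x" 1 "at_right 0"] tendsto_diff[OF tendsto_const tendsto_ident_at, of 1 0 "{0<..}"]
          eventually_mono[OF ev, of "\<lambda>x. 1 - x \<in> {-1..1}"] by auto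
      have 3: "((\<lambda>x::real. ln x * ln (1 - x)) \<longlongrightarrow> 0) (at_right 0)" by (rule lim_lnln)
      show ?thesis using tendsto_add[OF tendsto_add[OF 1 2] 3] by (simp add: g_def[abs_def] zeta_val_def)
    qed
  qed (use that in auto)
  show ?thesis
  proof (cases "x \<le> 1/2")
    case True with main[OF assms(1) True] show ?thesis by (simp add: g_def)
  next
    case False
    then have "g (1 - x) = zeta_val 2" using assms by (intro main) auto
    then have "polylog 2 (1 - x) + polylog 2 x + ln (1 - x) * ln x = zeta_val 2" by (simp add: g_def)
    then show ?thesis by (simp add: mult.commute)
  qed
qed

lemma lim_lnln1: "((\<lambda>x::real. ln x * ln (1 + x)) \<longlongrightarrow> 0) (at_right 0)"
  by real_asymp

lemma lim_lnln2: "((\<lambda>x::real. ln x * (ln (1 + x) - ln (1 - x))) \<longlongrightarrow> 0) (at_right 0)"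
  using tendsto_diff[OF lim_lnln1 lim_lnln] by (simp add: algebra_simps)

lemma lim_lnln3: "((\<lambda>x::real. ln x * ln (1 - x) * ln (1 - x)) \<longlongrightarrow> 0) (at_right 0)"
proof -
  have "((\<lambda>x::real. ln (1 - x)) \<longlongrightarrow> ln (1 - 0)) (at_right 0)"
    by (intro tendsto_intros) auto
  from tendsto_mult[OF lim_lnln this] show ?thesis by simp
qed

lemma Li_lim0:
  assumes "k \<ge> 2" "0 < c" "continuous_on {0..c} f" "\<And>x. x \<in> {0..c} \<Longrightarrow> f x \<in> {-1..1}"
  shows "((\<lambda>x. polylog k (f x)) \<longlongrightarrow> polylog k (f 0)) (at_right 0)"
proof -
  have "continuous_on {0..c} (\<lambda>x. polylog k (f x))" by (rule Li_cont_on[OF assms(1,3,4)])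
  then have "((\<lambda>x. polylog k (f x)) \<longlongrightarrow> polylog k (f 0)) (at 0 within {0..c})"
    using assms(2) by (auto simp: continuous_on_def)
  then show ?thesis using at_within_Icc_at_right[OF assms(2)] by simp
qed

lemma two_real_neq0: "(2::real) \<noteq> 0" "(3::real) \<noteq> 0" "(4::real) \<noteq> 0" "(6::real) \<noteq> 0" by simp_all

lemma Li2_landen:
  assumes "-1 \<le> z" "z \<le> 1/2"
  shows "polylog 2 z + polylog 2 (z / (z - 1)) = - (ln (1 - z) ^ 2) / 2"
proof -
  define g where "g z = polylog 2 z + polylog 2 (z / (z - 1)) + ln (1 - z) ^ 2 / 2" for z
  have rng: "z / (z - 1) \<in> {-1..1}" if "-1 \<le> z" "z \<le> 1/2" for z :: real
  proof -
    have "z - 1 < 0" using that by simp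
    then show ?thesis using that by (auto simp: divide_le_eq le_divide_eq)
  qed
  have cont: "continuous_on {-1..1/2} g" unfolding g_def
    by (intro continuous_intros Li_cont_on rng) auto
  have der: "(g has_real_derivative 0) (at t)" if "-1 < t" "t < 1/2" "t \<noteq> 0" for t
  proof -
    have h1: "\<bar>t\<bar> < 1" "t - 1 \<noteq> 0" "0 < 1 - t" using that by auto
    have h2: "\<bar>t / (t - 1)\<bar> < 1"
    proof -
      have "\<bar>t / (t - 1)\<bar> = \<bar>t\<bar> / (1 - t)" using h1 by (simp add: abs_divide)
      also have "\<dots> < 1" using that h1 by (simp add: divide_less_eq)
      finally show ?thesis .
    qed
    have h3: "t / (t - 1) \<noteq> 0" using that h1 by simp
    have h4: "1 - t / (t - 1) = 1 / (1 - t)" using h1 by (simp add: field_simps)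
    have h5: "ln (1 - t / (t - 1)) = - ln (1 - t)" using h1 by (simp add: h4 ln_div)
    show ?thesis unfolding g_def
      apply (rule derivative_eq_intros refl that h1 h2 h3 two_real_neq0)+
      apply (subst h5)
      using h1 that apply (simp add: divide_simps)
      apply (simp add: algebra_simps)
      done
  qed
  have g0: "g 0 = 0" by (simp add: g_def)
  have "g z = 0"
  proof (cases "z \<ge> 0")
    case True
    have "g z = g 0"
      by (rule const_start[of 0 z "1/2"]) (use assms True in \<open>auto intro!: der continuous_on_subset[OF cont]\<close>)
    then show ?thesis using g0 by simp
  next
    case False
    have "g z = g 0"
      by (rule const_end[of "-1" z 0]) (use assms False in \<open>auto intro!: der continuous_on_subset[OF cont]\<close>)
    then show ?thesis using g0 by simp
  qed
  then show ?thesis by (simp add: g_def)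
qed


lemma Li2_dup:
  assumes "0 \<le> z" "z \<le> 1"
  shows "polylog 2 (z^2) = 2 * (polylog 2 z + polylog 2 (-z))"
proof -
  define g where "g z = polylog 2 (z^2) / 2 - polylog 2 z - polylog 2 (-z)" for z :: real
  have cont: "continuous_on {0..1} g" unfolding g_def
    by (intro continuous_intros Li_cont_on) (auto simp: power_le_one abs_square_le_1, smt (verit) zero_le_power2)
  have der: "(g has_real_derivative 0) (at t)" if "0 < t" "t < 1" for t
  proof -
    have h1: "\<bar>t^2\<bar> < 1" "t^2 \<noteq> 0" "\<bar>t\<bar> < 1" "t \<noteq> 0" "\<bar>-t\<bar> < 1" "-t \<noteq> 0"
      using that by (auto simp: power_less_one_iff abs_square_less_1)
    have h5: "ln (1 - t^2) = ln (1 - t) + ln (1 - - t)"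
    proof -
      have "1 - t^2 = (1 - t) * (1 - - t)" by (simp add: algebra_simps power2_eq_square)
      then show ?thesis using that by (simp add: ln_mult)
    qed
    show ?thesis unfolding g_def
      apply (rule derivative_eq_intros refl h1 two_real_neq0)+
      apply (subst h5)
      using h1 that apply (simp add: divide_simps)
      apply (simp add: algebra_simps power2_eq_square)
      done
  qed
  have "g z = g 0"
    by (rule const_start[of 0 z 1]) (use assms in \<open>auto intro!: der cont\<close>)
  then show ?thesis by (simp add: g_def)
qed

lemma Li2_neg1: "polylog 2 (-1) = - zeta_val 2 / 2"
  using Li2_dup[of 1] by (simp add: zeta_val_def)

lemma Li3_dup:
  assumes "0 \<le> z" "z \<le> 1"
  shows "polylog 3 (z^2) = 4 * (polylog 3 z + polylog 3 (-z))"
proof -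
  define g where "g z = polylog 3 (z^2) / 4 - polylog 3 z - polylog 3 (-z)" for z :: real
  have cont: "continuous_on {0..1} g" unfolding g_def
    by (intro continuous_intros Li_cont_on) (auto simp: power_le_one abs_square_le_1, smt (verit) zero_le_power2)
  have der: "(g has_real_derivative 0) (at t)" if "0 < t" "t < 1" for t
  proof -
    have h1: "\<bar>t^2\<bar> < 1" "t^2 \<noteq> 0" "\<bar>t\<bar> < 1" "t \<noteq> 0" "\<bar>-t\<bar> < 1" "-t \<noteq> 0"
      using that by (auto simp: power_less_one_iff abs_square_less_1)
    have h5: "polylog 2 (t^2) = 2 * (polylog 2 t + polylog 2 (-t))"
      using that by (intro Li2_dup) auto
    show ?thesis unfolding g_def
      apply (rule derivative_eq_intros refl h1 two_real_neq0)+
      apply (subst h5)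
      using h1 that apply (simp add: divide_simps)
      apply (simp add: algebra_simps power2_eq_square)
      done
  qed
  have "g z = g 0"
    by (rule const_start[of 0 z 1]) (use assms in \<open>auto intro!: der cont\<close>)
  then show ?thesis by (simp add: g_def)
qed

lemma Li3_neg1: "polylog 3 (-1) = - 3/4 * zeta_val 3"
  using Li3_dup[of 1] by (simp add: zeta_val_def)


lemma chi2:
  assumes "0 < y" "y \<le> 1/2"
  shows "polylog 2 ((1-y)/(1+y)) - polylog 2 (-((1-y)/(1+y))) + polylog 2 y - polylog 2 (-y)
         = 3/2 * zeta_val 2 + ln y * (ln (1+y) - ln (1-y))"
proof -
  define g where "g y = polylog 2 ((1-y)/(1+y)) - polylog 2 (-((1-y)/(1+y))) + polylog 2 y
     - polylog 2 (-y) - ln y * (ln (1+y) - ln (1-y))" for y :: real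
  have rng: "(1-y)/(1+y) \<in> {-1..1}" "-((1-y)/(1+y)) \<in> {-1..1}" if "0 \<le> y" "y \<le> 1/2" for y :: real
    using that by (auto simp: divide_le_eq le_divide_eq)
  have "g y = 3/2 * zeta_val 2"
  proof (rule anchor0[of "1/2" g])
    show "continuous_on {0<..1/2} g" unfolding g_def
      by (intro continuous_intros Li_cont_on) (auto simp: divide_le_eq le_divide_eq)
    show "(g has_real_derivative 0) (at t)" if "0 < t" "t < 1/2" for t
    proof -
      have hs: "\<bar>(1-t)/(1+t)\<bar> < 1" "(1-t)/(1+t) \<noteq> 0" "\<bar>-((1-t)/(1+t))\<bar> < 1" "-((1-t)/(1+t)) \<noteq> 0"
        "\<bar>t\<bar> < 1" "t \<noteq> 0" "\<bar>-t\<bar> < 1" "-t \<noteq> 0" "0 < t" "0 < 1 + t" "0 < 1 - t" "1 + t \<noteq> 0"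
        using that by (auto simp: divide_less_eq less_divide_eq abs_less_iff)
      have r1: "ln (1 - (1-t)/(1+t)) = ln 2 + ln t - ln (1+t)"
      proof -
        have "1 - (1-t)/(1+t) = 2 * t / (1 + t)" using hs by (simp add: field_simps)
        then show ?thesis using hs by (simp add: ln_div ln_mult)
      qed
      have r2: "ln (1 - - ((1-t)/(1+t))) = ln 2 - ln (1+t)"
      proof -
        have "1 - - ((1-t)/(1+t)) = 2 / (1 + t)" using hs by (simp add: field_simps)
        then show ?thesis using hs by (simp add: ln_div)
      qed
      have r3: "ln (1 - - t) = ln (1 + t)" by simp
      show ?thesis unfolding g_def
        apply (rule derivative_eq_intros refl hs two_real_neq0)+
        apply (simp only: r1 r2 r3)
        using hs apply (simp add: divide_simps)
        apply (simp add: algebra_simps power2_eq_square)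
        done
    qed
    show "(g \<longlongrightarrow> 3/2 * zeta_val 2) (at_right 0)"
    proof -
      have c1: "continuous_on {0..1/2} (\<lambda>y::real. (1-y)/(1+y))"
        by (intro continuous_intros) auto
      have 1: "((\<lambda>x. polylog 2 ((1-x)/(1+x))) \<longlongrightarrow> polylog 2 ((1-0)/(1+0))) (at_right 0)"
        by (rule Li_lim0[OF _ _ c1]) (auto simp: divide_le_eq le_divide_eq)
      have 2: "((\<lambda>x. polylog 2 (-((1-x)/(1+x)))) \<longlongrightarrow> polylog 2 (-((1-0)/(1+0)))) (at_right 0)"
        by (rule Li_lim0[where f="\<lambda>y. -((1-y)/(1+y))" and c="1/2"]) (auto intro!: c1 continuous_intros simp: divide_le_eq le_divide_eq)
      have 3: "((\<lambda>x. polylog 2 x) \<longlongrightarrow> polylog 2 0) (at_right 0)"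
        by (rule Li_lim0[where f="\<lambda>y. y" and c=1]) (auto intro!: continuous_intros)
      have 4: "((\<lambda>x. polylog 2 (-x)) \<longlongrightarrow> polylog 2 (-0)) (at_right 0)"
        by (rule Li_lim0[where f="\<lambda>y. -y" and c=1]) (auto intro!: continuous_intros)
      have "(g \<longlongrightarrow> polylog 2 ((1-0)/(1+0)) - polylog 2 (-((1-0)/(1+0))) + polylog 2 0 - polylog 2 (-0) - 0) (at_right 0)"
        unfolding g_def[abs_def] by (intro tendsto_diff tendsto_add 1 2 3 4 lim_lnln2)
      then show ?thesis by (simp add: Li2_neg1 zeta_val_def)
    qed
  qed (use assms in auto)
  then show ?thesis by (simp add: g_def)
qed

lemma landen_rng: "-1 \<le> z \<Longrightarrow> z \<le> 1/2 \<Longrightarrow> z / (z - 1) \<in> {-1..1::real}"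
proof -
  assume a: "-1 \<le> z" "z \<le> 1/2"
  then have "z - 1 < 0" by simp
  then show ?thesis using a by (auto simp: divide_le_eq le_divide_eq)
qed

lemma landen_rng1: "-1 \<le> z \<Longrightarrow> z \<le> 1/2 \<Longrightarrow> -1 \<le> z / (z - 1::real)"
  using landen_rng by auto
lemma landen_rng2: "-1 \<le> z \<Longrightarrow> z \<le> 1/2 \<Longrightarrow> z / (z - 1::real) \<le> 1"
  using landen_rng by auto

lemma Li3_landen:
  assumes "0 < x" "x \<le> 1/2"
  shows "polylog 3 x + polylog 3 (1-x) + polylog 3 (x/(x-1)) =
         zeta_val 3 + ln (1-x) ^ 3 / 6 + zeta_val 2 * ln (1-x) - ln x * ln (1-x) * ln (1-x) / 2"
proof -
  define g where "g x = polylog 3 x + polylog 3 (1-x) + polylog 3 (x/(x-1))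
      - ln (1-x) ^ 3 / 6 - zeta_val 2 * ln (1-x) + ln x * ln (1-x) * ln (1-x) / 2" for x :: real
  have "g x = zeta_val 3"
  proof (rule anchor0[of "1/2" g])
    show "continuous_on {0<..1/2} g" unfolding g_def
      by (intro continuous_intros Li_cont_on) (auto intro!: landen_rng1 landen_rng2)
    show "(g has_real_derivative 0) (at t)" if "0 < t" "t < 1/2" for t
    proof -
      have hs: "\<bar>t\<bar> < 1" "t \<noteq> 0" "\<bar>1 - t\<bar> < 1" "1 - t \<noteq> 0" "t - 1 \<noteq> 0" "0 < 1 - t" "0 < t"
        using that by auto
      have hw: "\<bar>t/(t-1)\<bar> < 1" "t/(t-1) \<noteq> 0"
      proof -
        have "\<bar>t / (t - 1)\<bar> = \<bar>t\<bar> / (1 - t)" using hs by (simp add: abs_divide)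
        also have "\<dots> < 1" using that hs by (simp add: divide_less_eq)
        finally show "\<bar>t/(t-1)\<bar> < 1" .
        show "t/(t-1) \<noteq> 0" using hs by simp
      qed
      have r1: "polylog 2 (t/(t-1)) = - polylog 2 t - ln (1 - t) ^ 2 / 2"
        using Li2_landen[of t] that by simp
      have r2: "polylog 2 (1 - t) = zeta_val 2 - ln t * ln (1 - t) - polylog 2 t"
        using Li2_reflection[of t] that by simp
      show ?thesis unfolding g_def
        apply (rule derivative_eq_intros refl hs hw two_real_neq0)+
        apply (simp only: r1 r2)
        using hs apply (simp add: divide_simps)
        apply (simp add: algebra_simps power2_eq_square power3_eq_cube)
        done
    qed
    show "(g \<longlongrightarrow> zeta_val 3) (at_right 0)"
    proof -
      have 1: "((\<lambda>x. polylog 3 x) \<longlongrightarrow> polylog 3 0) (at_right 0)"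
        by (rule Li_lim0[where f="\<lambda>y. y" and c=1]) (auto intro!: continuous_intros)
      have 2: "((\<lambda>x. polylog 3 (1-x)) \<longlongrightarrow> polylog 3 (1-0)) (at_right 0)"
        by (rule Li_lim0[where f="\<lambda>y. 1-y" and c=1]) (auto intro!: continuous_intros)
      have 3: "((\<lambda>x. polylog 3 (x/(x-1))) \<longlongrightarrow> polylog 3 (0/(0-1))) (at_right 0)"
        by (rule Li_lim0[where f="\<lambda>y. y/(y-1)" and c="1/2"]) (auto intro!: continuous_intros landen_rng1 landen_rng2)
      have 4: "((\<lambda>x::real. ln (1-x)) \<longlongrightarrow> ln (1-0)) (at_right 0)"
        by (intro tendsto_intros) auto
      have "(g \<longlongrightarrow> polylog 3 0 + polylog 3 (1-0) + polylog 3 (0/(0-1)) - ln (1-0) ^ 3 / 6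
               - zeta_val 2 * ln (1-0) + 0 / 2) (at_right 0)"
        unfolding g_def[abs_def] by (intro tendsto_diff tendsto_add tendsto_divide tendsto_mult tendsto_power 1 2 3 4 lim_lnln3 tendsto_const) auto
      then show ?thesis by (simp add: zeta_val_def)
    qed
  qed (use assms in auto)
  then show ?thesis by (simp add: g_def)
qed


lemma Psi:
  assumes "0 \<le> y" "y \<le> 1/2"
  shows "polylog 3 ((1-y)/(1+y)) - polylog 3 (-((1-y)/(1+y))) - 2 * polylog 3 (1-y)
     - 2 * polylog 3 (1/(1+y)) + polylog 3 (1 - y^2) / 2 - zeta_val 2 * ln (1+y) + ln (1+y) ^ 3 / 3
     = - 7/4 * zeta_val 3"
proof -
  define g where "g y = polylog 3 ((1-y)/(1+y)) - polylog 3 (-((1-y)/(1+y))) - 2 * polylog 3 (1-y)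
     - 2 * polylog 3 (1/(1+y)) + polylog 3 (1 - y^2) / 2 - zeta_val 2 * ln (1+y) + ln (1+y) ^ 3 / 3"
    for y :: real
  have sq: "y^2 \<le> 1" if "0 \<le> y" "y \<le> 1/2" for y :: real
    using that by (simp add: power_le_one)
  have r1: "(1-x)/(1+x) \<in> {-1..1}" "-((1-x)/(1+x)) \<in> {-1..1}" "1-x \<in> {-1..1}"
     "1/(1+x) \<in> {-1..1}" "1 - x^2 \<in> {-1..1}" "1 + x \<noteq> 0" "0 < 1 + x" if "x \<in> {0..1/2}" for x :: real
  proof -
    have x: "0 \<le> x" "x \<le> 1/2" using that by auto
    then have "x^2 \<le> 1" "0 \<le> x^2" by (simp_all add: power_le_one)
    then show "1 - x^2 \<in> {-1..1}" by auto
    show "(1-x)/(1+x) \<in> {-1..1}" "-((1-x)/(1+x)) \<in> {-1..1}" "1-x \<in> {-1..1}"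
     "1/(1+x) \<in> {-1..1}" "1 + x \<noteq> 0" "0 < 1 + x" using x by (auto simp: divide_le_eq le_divide_eq)
  qed
  have cont: "continuous_on {0..1/2} g" unfolding g_def
    by (intro continuous_intros Li_cont_on r1) auto
  have der: "(g has_real_derivative 0) (at t)" if "0 < t" "t < 1/2" for t
  proof -
    have hs: "\<bar>(1-t)/(1+t)\<bar> < 1" "(1-t)/(1+t) \<noteq> 0" "\<bar>-((1-t)/(1+t))\<bar> < 1" "-((1-t)/(1+t)) \<noteq> 0"
      "\<bar>1 - t\<bar> < 1" "1 - t \<noteq> 0" "\<bar>1/(1+t)\<bar> < 1" "1/(1+t) \<noteq> 0" "1 + t \<noteq> 0" "0 < 1 + t"
      using that by (auto simp: divide_less_eq less_divide_eq abs_less_iff)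
    have ht: "\<bar>1 - t^2\<bar> < 1" "1 - t^2 \<noteq> 0"
    proof -
      have "0 < t^2" "t^2 < 1" using that by (auto simp: power_less_one_iff)
      then show "\<bar>1 - t^2\<bar> < 1" "1 - t^2 \<noteq> 0" by auto
    qed
    have rA: "polylog 2 ((1-t)/(1+t)) = polylog 2 (-((1-t)/(1+t))) + 3/2 * zeta_val 2
        + ln t * (ln (1+t) - ln (1-t)) - polylog 2 t + polylog 2 (-t)"
      using chi2[of t] that by simp
    have rB: "polylog 2 (1 - t) = zeta_val 2 - ln t * ln (1 - t) - polylog 2 t"
      using Li2_reflection[of t] that by simp
    have rC: "polylog 2 (1/(1+t)) = zeta_val 2 + (ln t - ln (1+t)) * ln (1+t) + polylog 2 (-t) + ln (1+t) ^ 2 / 2"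
    proof -
      have e1: "1 - t/(1+t) = 1/(1+t)" using hs by (simp add: field_simps)
      have "polylog 2 (t/(1+t)) + polylog 2 (1/(1+t)) = zeta_val 2 - ln (t/(1+t)) * ln (1/(1+t))"
        using Li2_reflection[of "t/(1+t)"] that e1 by simp
      moreover have "polylog 2 (-t) + polylog 2 (t/(1+t)) = - (ln (1+t) ^ 2) / 2"
      proof -
        have "(-t)/(-t-1) = t/(1+t)" using hs by (simp add: field_simps)
        then show ?thesis using Li2_landen[of "-t"] that by simp
      qed
      moreover have "ln (t/(1+t)) = ln t - ln (1+t)" "ln (1/(1+t)) = - ln (1+t)"
        using that by (simp_all add: ln_div)
      ultimately show ?thesis by (simp add: algebra_simps)
    qed
    have rD: "polylog 2 (1 - t^2) = zeta_val 2 - 2 * ln t * (ln (1-t) + ln (1+t)) - 2 * polylog 2 t - 2 * polylog 2 (-t)"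
    proof -
      have "0 < t^2" "t^2 < 1" using that by (auto simp: power_less_one_iff)
      then have "polylog 2 (t^2) + polylog 2 (1 - t^2) = zeta_val 2 - ln (t^2) * ln (1 - t^2)"
        by (rule Li2_reflection)
      moreover have "polylog 2 (t^2) = 2 * (polylog 2 t + polylog 2 (-t))" using that by (intro Li2_dup) auto
      moreover have "ln (t^2) = 2 * ln t" using that by (simp add: ln_realpow)
      moreover have "ln (1 - t^2) = ln (1-t) + ln (1+t)"
      proof -
        have "1 - t^2 = (1 - t) * (1 + t)" by (simp add: algebra_simps power2_eq_square)
        then show ?thesis using that by (simp add: ln_mult)
      qed
      ultimately show ?thesis by (simp add: algebra_simps)
    qed
    show ?thesis unfolding g_def
      apply (rule derivative_eq_intros refl hs ht two_real_neq0)+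
      apply (simp only: rA rB rC rD)
      using hs ht that apply (simp add: divide_simps)
      apply (simp add: algebra_simps power2_eq_square power3_eq_cube)
      done
  qed
  have "g y = g 0"
    by (rule const_start[of 0 y "1/2"]) (use assms in \<open>auto intro!: der cont\<close>)
  also have "g 0 = - 7/4 * zeta_val 3" by (simp add: g_def Li3_neg1 zeta_val_def)
  finally show ?thesis by (simp add: g_def)
qed

lemma trilog_special:
  "polylog 3 (- (1/3)) - 2 * polylog 3 (1/3) = - (ln 3 ^ 3) / 6 + zeta_val 2 * ln 3 - 13/6 * zeta_val 3"
proof -
  have l4: "ln (4::real) = 2 * ln 2"
    using ln_mult[of 2 2] by simp
  have A: "2 * polylog 3 (1 / 2) + polylog 3 (- 1) =
    zeta_val 3 + ln (1 / 2) ^ 3 / 6 + zeta_val 2 * ln (1 / 2) - ln (1 / 2) * ln (1 / 2) * ln (1 / 2) / 2"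
    using Li3_landen[of "1/2"] by simp
  have B: "polylog 3 (1 / 3) + polylog 3 (2 / 3) + polylog 3 (- (1 / 2)) =
    zeta_val 3 + ln (2 / 3) ^ 3 / 6 + zeta_val 2 * ln (2 / 3) - ln (1 / 3) * ln (2 / 3) * ln (2 / 3) / 2"
    using Li3_landen[of "1/3"] by simp
  have C: "polylog 3 (1 / 4) + polylog 3 (3 / 4) + polylog 3 (- (1 / 3)) =
    zeta_val 3 + ln (3 / 4) ^ 3 / 6 + zeta_val 2 * ln (3 / 4) - ln (1 / 4) * ln (3 / 4) * ln (3 / 4) / 2"
    using Li3_landen[of "1/4"] by simp
  have D: "polylog 3 (1 / 3) - polylog 3 (- (1 / 3)) - 2 * polylog 3 (1 / 2) - 2 * polylog 3 (2 / 3) +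
    polylog 3 (3/4) / 2 - zeta_val 2 * ln (3 / 2) + ln (3 / 2) ^ 3 / 3 = - (7 * zeta_val 3 / 4)"
    using Psi[of "1/2"] by (simp add: power2_eq_square)
  have E: "polylog 3 (1/4) = 4 * polylog 3 (1 / 2) + 4 * polylog 3 (- (1 / 2))"
    using Li3_dup[of "1/2"] by (simp add: power2_eq_square)
  have F: "polylog 3 (-1) = - 3/4 * zeta_val 3" by (rule Li3_neg1)
  have lg: "ln (1/2::real) = - ln 2" "ln (2/3::real) = ln 2 - ln 3" "ln (1/3::real) = - ln 3"
    "ln (3/4::real) = ln 3 - 2 * ln 2" "ln (1/4::real) = - 2 * ln 2" "ln (3/2::real) = ln 3 - ln 2"
    by (simp_all add: ln_div l4)
  note facts = A B C D E F
  show ?thesis using facts unfolding lg by algebra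
qed


lemma deriv_within_to_at:
  assumes "(f has_real_derivative D) (at t within {a..})" "a < t"
  shows "(f has_real_derivative D) (at t)"
proof -
  have "(f has_real_derivative D) (at t within {a<..})"
    by (rule DERIV_subset[OF assms(1)]) auto
  moreover have "at t within {a<..} = at t" using assms(2) by (intro at_within_open) auto
  ultimately show ?thesis by simp
qed

lemma cont_from_deriv:
  assumes "\<And>t. t \<ge> a \<Longrightarrow> (f has_real_derivative D t) (at t within {a..})"
  shows "continuous_on {a..b} f"
proof -
  have "continuous (at t within {a..b}) f" if "t \<in> {a..b}" for t
  proof -
    have "continuous (at t within {a..}) f"
      using assms[of t] that by (intro DERIV_continuous) auto
    then show ?thesis by (rule continuous_within_subset) auto
  qed
  then show ?thesis by (simp add: continuous_on_eq_continuous_within)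
qed

lemma P1_closed:
  fixes P :: "nat \<Rightarrow> real \<Rightarrow> real"
  assumes P0: "\<And>x. x \<ge> 0 \<Longrightarrow> P 0 x = 1"
    and Pinit: "\<And>k. k \<ge> 1 \<Longrightarrow> P k (real k) = 0"
    and Pderiv: "\<And>k x. k \<ge> 1 \<Longrightarrow> x \<ge> real k \<Longrightarrow>
        ((P k) has_real_derivative (P (k - 1) (x - 1) / x)) (at x within {real k..})"
    and x: "x \<ge> 1"
  shows "P 1 x = ln x"
proof -
  define h where "h y = P 1 y - ln y" for y
  have d1: "(P 1 has_real_derivative 1 / t) (at t within {1..})" if "t \<ge> 1" for t
    using Pderiv[of 1 t] that P0[of "t - 1"] by simp
  have "h x = h 1"
  proof (rule const_start[of 1 x x])
    show "continuous_on {1..x} h" unfolding h_def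
      by (intro continuous_intros cont_from_deriv[OF d1]) auto
    show "(h has_real_derivative 0) (at t)" if "1 < t" "t < x" for t
    proof -
      have "(P 1 has_real_derivative 1 / t) (at t)"
        using deriv_within_to_at[OF d1] that by auto
      then have "(h has_real_derivative 1 / t - 1 / t) (at t)"
        unfolding h_def[abs_def] using that by (intro derivative_intros) auto
      then show ?thesis by simp
    qed
  qed (use x in auto)
  moreover have "h 1 = 0" using Pinit[of 1] by (simp add: h_def)
  ultimately show ?thesis by (simp add: h_def)
qed


lemma P2_closed:
  fixes P :: "nat \<Rightarrow> real \<Rightarrow> real"
  assumes P0: "\<And>x. x \<ge> 0 \<Longrightarrow> P 0 x = 1"
    and Pinit: "\<And>k. k \<ge> 1 \<Longrightarrow> P k (real k) = 0"
    and Pderiv: "\<And>k x. k \<ge> 1 \<Longrightarrow> x \<ge> real k \<Longrightarrow>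
        ((P k) has_real_derivative (P (k - 1) (x - 1) / x)) (at x within {real k..})"
    and x: "x \<ge> 2"
  shows "P 2 x = ln x ^ 2 / 2 + polylog 2 (1/x) - zeta_val 2 / 2"
proof -
  define Q where "Q y = ln y ^ 2 / 2 + polylog 2 (1/y) - zeta_val 2 / 2" for y :: real
  define h where "h y = P 2 y - Q y" for y
  have d2: "(P 2 has_real_derivative ln (t - 1) / t) (at t within {2..})" if "t \<ge> 2" for t
  proof -
    have "P 1 (t - 1) = ln (t - 1)" using that by (intro P1_closed[OF P0 Pinit Pderiv]) auto
    then show ?thesis using Pderiv[of 2 t] that by simp
  qed
  have dQ: "(Q has_real_derivative ln (t - 1) / t) (at t)" if "2 < t" for t
  proof -
    have hs: "\<bar>1/t\<bar> < 1" "1/t \<noteq> 0" "t \<noteq> 0" "0 < t" using that by auto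
    have r: "ln (1 - 1/t) = ln (t - 1) - ln t"
    proof -
      have "1 - 1/t = (t - 1) / t" using hs by (simp add: field_simps)
      then show ?thesis using that by (simp add: ln_div)
    qed
    show ?thesis unfolding Q_def
      apply (rule derivative_eq_intros refl hs two_real_neq0)+
      apply (simp only: r)
      using hs apply (simp add: divide_simps)
      done
  qed
  have "h x = h 2"
  proof (rule const_start[of 2 x x])
    show "continuous_on {2..x} h" unfolding h_def Q_def
      by (intro continuous_intros cont_from_deriv[OF d2] Li_cont_on) (auto simp: divide_le_eq le_divide_eq)
    show "(h has_real_derivative 0) (at t)" if "2 < t" "t < x" for t
    proof -
      have "(P 2 has_real_derivative ln (t - 1) / t) (at t)"
        using deriv_within_to_at[OF d2] that by auto
      then have "(h has_real_derivative ln (t - 1) / t - ln (t - 1) / t) (at t)"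
        unfolding h_def[abs_def] using that by (intro derivative_intros dQ) auto
      then show ?thesis by simp
    qed
  qed (use x in auto)
  moreover have "h 2 = 0"
  proof -
    have "polylog 2 (1/2) + polylog 2 (1 - 1/2) = zeta_val 2 - ln (1/2) * ln (1 - 1/2)"
      by (rule Li2_reflection) auto
    moreover have "ln (1/2::real) = - ln 2" by (simp add: ln_div)
    ultimately have "polylog 2 (1/2) = zeta_val 2 / 2 - ln 2 ^ 2 / 2" by (simp add: power2_eq_square)
    then show ?thesis using Pinit[of 2] by (simp add: h_def Q_def)
  qed
  ultimately show ?thesis by (simp add: h_def Q_def)
qed


definition FF :: "real \<Rightarrow> real" where
  "FF u = (1/2) * polylog 3 (1 / (u * (2 - u))) - polylog 3 (1 / u)
      - polylog 3 (1 / (2 - u)) + polylog 2 (1 / u) * ln (u - 2)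
      + (1/3) * zeta_val 3 - (1/2) * zeta_val 2 * ln u
      + (1/12) * (ln (u * (u - 2))) ^ 3 - (1/2) * (ln (u - 2)) ^ 2 * ln u"

lemma FF_deriv:
  assumes t: "3 < t"
  shows "(FF has_real_derivative (ln (t - 1) ^ 2 / 2 + polylog 2 (1/(t-1)) - zeta_val 2 / 2) / t) (at t)"
proof -
  define y where "y = 1 / (t - 1)"
  have y: "0 < y" "y < 1/2" using t by (auto simp: y_def divide_less_eq)
  have nz: "t \<noteq> 0" "t - 1 \<noteq> 0" "t - 2 \<noteq> 0" "2 - t \<noteq> 0" "t * (2 - t) \<noteq> 0" "0 < t" "0 < t - 2"
    "0 < t * (t - 2)" "0 < t - 1"
    using t by auto
  have hs: "\<bar>1 / (t * (2 - t))\<bar> < 1" "1 / (t * (2 - t)) \<noteq> 0" "\<bar>1/t\<bar> < 1" "1/t \<noteq> 0"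
    "\<bar>1/(2-t)\<bar> < 1" "1/(2-t) \<noteq> 0"
  proof -
    have p: "1 < t * (t - 2)" by (rule less_1_mult) (use t in auto)
    have eq: "t * (2 - t) = - (t * (t - 2))" by (simp add: algebra_simps)
    have "\<bar>1 / (t * (2 - t))\<bar> = 1 / (t * (t - 2))" using p unfolding eq by (simp add: abs_divide)
    then show "\<bar>1 / (t * (2 - t))\<bar> < 1" using p by simp
    show "\<bar>1/(2-t)\<bar> < 1" using t by (simp add: abs_divide divide_less_eq)
  qed (use t in auto)
  have lt: "ln (t * (t - 2)) = ln t + ln (t - 2)" using nz by (simp add: ln_mult)
  have l1: "ln (1 - 1/t) = ln (t - 1) - ln t"
  proof -
    have "1 - 1/t = (t - 1) / t" using nz by (simp add: field_simps)
    then show ?thesis using nz by (simp add: ln_div)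
  qed
  have R1: "polylog 2 (1 / (t * (2 - t))) = - 2 * polylog 2 y - 2 * polylog 2 (-y)
      - (ln t + ln (t - 2) - 2 * ln (t - 1)) ^ 2 / 2"
  proof -
    have "y^2 < (1/2)^2" by (rule power_strict_mono) (use y in auto)
    then have y2: "0 < y^2" "y^2 < 1/4" using y by (auto simp: power2_eq_square)
    have aux: "1 + t * t \<noteq> t * 2"
    proof -
      have "0 < (t-1)*(t-1)" using nz by simp
      then show ?thesis by (simp add: algebra_simps)
    qed
    have e1: "y^2 / (y^2 - 1) = 1 / (t * (2 - t))" using nz aux
      by (simp add: y_def field_simps power2_eq_square, (simp add: algebra_simps)?)
    have e2: "ln (1 - y^2) = ln t + ln (t - 2) - 2 * ln (t - 1)"
    proof -
      have "1 - y^2 = (t * (t - 2)) / (t - 1)^2" using nz aux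
        by (simp add: y_def field_simps power2_eq_square, (simp add: algebra_simps)?)
      then show ?thesis using nz by (simp add: ln_div ln_mult ln_realpow)
    qed
    have "polylog 2 (y^2) + polylog 2 (y^2 / (y^2 - 1)) = - (ln (1 - y^2) ^ 2) / 2"
      using y2 by (intro Li2_landen) linarith+
    moreover have "polylog 2 (y^2) = 2 * (polylog 2 y + polylog 2 (-y))" using y by (intro Li2_dup) auto
    ultimately show ?thesis unfolding e1 e2 by (simp add: algebra_simps)
  qed
  have R2: "polylog 2 (1/t) = - polylog 2 (-y) - (ln t - ln (t - 1)) ^ 2 / 2"
  proof -
    have e1: "(-y) / (-y - 1) = 1/t" using nz by (simp add: y_def field_simps)
    have e2: "ln (1 - -y) = ln t - ln (t - 1)"
    proof -
      have "1 - -y = t / (t - 1)" using nz by (simp add: y_def field_simps)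
      then show ?thesis using nz by (simp add: ln_div)
    qed
    have "polylog 2 (-y) + polylog 2 ((-y) / (-y - 1)) = - (ln (1 - -y) ^ 2) / 2"
      using y by (intro Li2_landen) auto
    then show ?thesis unfolding e1 e2 by (simp add: algebra_simps)
  qed
  have R3: "polylog 2 (1/(2-t)) = - polylog 2 y - (ln (t - 2) - ln (t - 1)) ^ 2 / 2"
  proof -
    have e1: "y / (y - 1) = 1/(2-t)" using nz by (simp add: y_def field_simps)
    have e2: "ln (1 - y) = ln (t - 2) - ln (t - 1)"
    proof -
      have "1 - y = (t - 2) / (t - 1)" using nz by (simp add: y_def field_simps)
      then show ?thesis using nz by (simp add: ln_div)
    qed
    have "polylog 2 y + polylog 2 (y / (y - 1)) = - (ln (1 - y) ^ 2) / 2"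
      using y by (intro Li2_landen) auto
    then show ?thesis unfolding e1 e2 by (simp add: algebra_simps)
  qed
  have R4: "polylog 2 (1/(t-1)) = polylog 2 y" by (simp add: y_def)
  show ?thesis unfolding FF_def
    apply (rule derivative_eq_intros refl hs nz two_real_neq0)+
    apply (simp only: R1 R2 R3 R4 lt l1)
    using nz apply (simp add: divide_simps)
    apply (simp add: algebra_simps power2_eq_square power3_eq_cube)
    done
qed


lemma FF_cont: "continuous_on {3..b} FF"
proof -
  have r: "1 / (x * (2 - x)) \<in> {-1..1}" "1 / x \<in> {-1..1}" "1 / (2 - x) \<in> {-1..1}"
    "x * (2 - x) \<noteq> 0" "x \<noteq> 0" "2 - x \<noteq> 0" "0 < x" "0 < x - 2" "0 < x * (x - 2)"
    if "x \<in> {3..b}" for x :: real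
  proof -
    have x: "3 \<le> x" using that by auto
    have "1 * 1 \<le> x * (x - 2)" by (rule mult_mono) (use x in auto)
    then have p: "1 \<le> x * (x - 2)" by simp
    have eq: "x * (2 - x) = - (x * (x - 2))" by (simp add: algebra_simps)
    have "\<bar>1 / (x * (2 - x))\<bar> = 1 / (x * (x - 2))" using p unfolding eq by (simp add: abs_divide)
    then have "\<bar>1 / (x * (2 - x))\<bar> \<le> 1" using p by simp
    then show "1 / (x * (2 - x)) \<in> {-1..1}" unfolding atLeastAtMost_iff by linarith
    show "1 / x \<in> {-1..1}" "1 / (2 - x) \<in> {-1..1}" using x by (auto simp: divide_le_eq le_divide_eq)
    show "x * (2 - x) \<noteq> 0" "x \<noteq> 0" "2 - x \<noteq> 0" "0 < x" "0 < x - 2" "0 < x * (x - 2)"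
      using x p by auto
  qed
  show ?thesis unfolding FF_def
    by (intro continuous_intros Li_cont_on r) auto
qed

lemma FF_3: "FF 3 = 0"
proof -
  have "FF 3 = (1/2) * polylog 3 (- (1/3)) - polylog 3 (1/3) - polylog 3 (-1)
      + (1/3) * zeta_val 3 - (1/2) * zeta_val 2 * ln 3 + (1/12) * (ln 3) ^ 3"
    by (simp add: FF_def)
  also have "\<dots> = 0" using trilog_special Li3_neg1 by algebra
  finally show ?thesis .
qed

theorem theorem4:
  fixes P :: "nat \<Rightarrow> real \<Rightarrow> real" and u :: real
  assumes P0: "\<And>x. x \<ge> 0 \<Longrightarrow> P 0 x = 1"
    and Pinit: "\<And>k. k \<ge> 1 \<Longrightarrow> P k (real k) = 0"
    and Pderiv: "\<And>k x. k \<ge> 1 \<Longrightarrow> x \<ge> real k \<Longrightarrow>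
        ((P k) has_real_derivative (P (k - 1) (x - 1) / x)) (at x within {real k..})"
    and u: "u \<ge> 3"
  shows "P 3 u = (1/2) * polylog 3 (1 / (u * (2 - u))) - polylog 3 (1 / u)
      - polylog 3 (1 / (2 - u)) + polylog 2 (1 / u) * ln (u - 2)
      + (1/3) * zeta_val 3 - (1/2) * zeta_val 2 * ln u
      + (1/12) * (ln (u * (u - 2))) ^ 3 - (1/2) * (ln (u - 2)) ^ 2 * ln u"
proof -
  define h where "h x = P 3 x - FF x" for x
  have d3: "(P 3 has_real_derivative (ln (t - 1) ^ 2 / 2 + polylog 2 (1/(t-1)) - zeta_val 2 / 2) / t)
      (at t within {3..})" if "t \<ge> 3" for t
  proof -
    have "P 2 (t - 1) = ln (t - 1) ^ 2 / 2 + polylog 2 (1/(t-1)) - zeta_val 2 / 2"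
      using that by (intro P2_closed[OF P0 Pinit Pderiv]) auto
    then show ?thesis using Pderiv[of 3 t] that by simp
  qed
  have "h u = h 3"
  proof (rule const_start[of 3 u u])
    show "continuous_on {3..u} h" unfolding h_def
      by (intro continuous_intros cont_from_deriv[OF d3] FF_cont) auto
    show "(h has_real_derivative 0) (at t)" if "3 < t" "t < u" for t
    proof -
      have "(P 3 has_real_derivative (ln (t - 1) ^ 2 / 2 + polylog 2 (1/(t-1)) - zeta_val 2 / 2) / t) (at t)"
        using deriv_within_to_at[OF d3] that by auto
      then have "(h has_real_derivative (ln (t - 1) ^ 2 / 2 + polylog 2 (1/(t-1)) - zeta_val 2 / 2) / t
           - (ln (t - 1) ^ 2 / 2 + polylog 2 (1/(t-1)) - zeta_val 2 / 2) / t) (at t)"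
        unfolding h_def[abs_def] using that by (intro derivative_intros FF_deriv) auto
      then show ?thesis by simp
    qed
  qed (use u in auto)
  moreover have "h 3 = 0" using Pinit[of 3] FF_3 by (simp add: h_def)
  ultimately have "P 3 u = FF u" by (simp add: h_def)
  then show ?thesis by (simp add: FF_def)
qed

end
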